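(* Let $n\ge1$, fix $a\in\{0,1\}$ and a time $t\in\{0,1,\dots,t_{\max}\}$, and let $U=\{u\in\{0,\dots,t_{\max}\}:u\le t\}$. Given data $X_1,\dots,X_n\in\mathcal X$, indicators $\iota_{iu}=\mathbf 1(A_i=a,G_i^u=1)\in\{0,1\}$ and real numbers $\hat r_{iu}=\hat r_u(X_i,a)$ for $i\le n$, $u\in U$, and a norm $\|\cdot\|$ on a vector space of real functions on $\mathcal X$, and $\sigma>0$, suppose $\hat\omega\in\mathbb R^{n\times U}$ minimizes $$I(\omega)^2+\frac{\sigma^2}{nt}\sum_{i=1}^n\sum_{u\in U}\hat r_{iu}^2\iota_{iu}\omega_{iu}^2,\qquad I(\omega)=\sup_{\sum_{u\in U}\|h_u\|^2\le1}\frac1n\sum_{i=1}^n\sum_{u\in U}\big\{\hat r_{iu}h_u(X_i)-\iota_{iu}\hat r_{iu}\omega_{iu}h_u(X_i)\big\}.$$ Then for each $u\in U$, the vector $\hat\omega_u=(\hat\omega_{1u},\dots,\hat\omega_{nu})$ minimizes over $\omega_u\in\mathbb R^n$ $$I_u(\omega_u)^2+\frac{\sigma^2}{nt}\sum_{i=1}^n\hat r_{iu}^2\iota_{iu}\omega_{iu}^2,\qquad I_u(\omega_u)=\sup_{\|h_u\|\le1}\frac1n\sum_{i=1}^n\big\{\hat r_{iu}h_u(X_i)-\iota_{iu}\hat r_{iu}\omega_{iu}h_u(X_i)\big\}.$$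
   Context: Here $A_i\in\{0,1\}$ is a treatment indicator, $G_i^u=\mathbf 1(\tilde T_i\ge u)$ is an at-risk indicator, and $\hat r_u(x,a)$ are given real-valued functions; in the paper $\hat r_u(x,a)=-\hat S_t(x,a)\hat S_{u-1}(x,a)/\hat S_u(x,a)$ for an estimated survival function $\hat S$, but the statement holds for arbitrary real $\hat r_{iu}$. *)

theory Defs
  imports Complex_Main
begin

definition normed_fun_space :: "('x \<Rightarrow> real) set \<Rightarrow> (('x \<Rightarrow> real) \<Rightarrow> real) \<Rightarrow> bool" where
  "normed_fun_space V N \<longleftrightarrow>
     (\<lambda>_. 0) \<in> V \<and>
     (\<forall>f\<in>V. \<forall>g\<in>V. (\<lambda>x. f x + g x) \<in> V) \<and>
     (\<forall>c. \<forall>f\<in>V. (\<lambda>x. c * f x) \<in> V) \<and>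
     (\<forall>f\<in>V. N f \<ge> 0) \<and>
     (\<forall>f\<in>V. N f = 0 \<longleftrightarrow> f = (\<lambda>_. 0)) \<and>
     (\<forall>c. \<forall>f\<in>V. N (\<lambda>x. c * f x) = \<bar>c\<bar> * N f) \<and>
     (\<forall>f\<in>V. \<forall>g\<in>V. N (\<lambda>x. f x + g x) \<le> N f + N g)"

text \<open>Indicator iota_{iu} = 1(A_i = a, G_i^u = 1), with G_i^u = 1(Ttilde_i >= u).\<close>
definition iota :: "(nat \<Rightarrow> nat) \<Rightarrow> (nat \<Rightarrow> real) \<Rightarrow> nat \<Rightarrow> nat \<Rightarrow> nat \<Rightarrow> real" where
  "iota A Tt a i u = (if A i = a \<and> Tt i \<ge> real u then 1 else 0)"

definition I_set :: "nat \<Rightarrow> nat set \<Rightarrow> ('x \<Rightarrow> real) set \<Rightarrow> (('x \<Rightarrow> real) \<Rightarrow> real)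
    \<Rightarrow> (nat \<Rightarrow> 'x) \<Rightarrow> (nat \<Rightarrow> nat \<Rightarrow> real) \<Rightarrow> (nat \<Rightarrow> nat \<Rightarrow> real)
    \<Rightarrow> (nat \<Rightarrow> nat \<Rightarrow> real) \<Rightarrow> real set" where
  "I_set n U V N X io r w =
     {(1 / real n) * (\<Sum>i<n. \<Sum>u\<in>U. r i u * h u (X i) - io i u * r i u * w i u * h u (X i)) | h.
        (\<forall>u\<in>U. h u \<in> V) \<and> (\<Sum>u\<in>U. (N (h u))\<^sup>2) \<le> 1}"

definition I_fun where
  "I_fun n U V N X io r w = Sup (I_set n U V N X io r w)"

definition Iu_set :: "nat \<Rightarrow> nat \<Rightarrow> ('x \<Rightarrow> real) set \<Rightarrow> (('x \<Rightarrow> real) \<Rightarrow> real)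
    \<Rightarrow> (nat \<Rightarrow> 'x) \<Rightarrow> (nat \<Rightarrow> nat \<Rightarrow> real) \<Rightarrow> (nat \<Rightarrow> nat \<Rightarrow> real)
    \<Rightarrow> (nat \<Rightarrow> real) \<Rightarrow> real set" where
  "Iu_set n u V N X io r wu =
     {(1 / real n) * (\<Sum>i<n. r i u * hu (X i) - io i u * r i u * wu i * hu (X i)) | hu.
        hu \<in> V \<and> N hu \<le> 1}"

definition Iu_fun where
  "Iu_fun n u V N X io r wu = Sup (Iu_set n u V N X io r wu)"

definition obj where
  "obj n t U V N X io r \<sigma> w =
     (I_fun n U V N X io r w)\<^sup>2 + \<sigma>\<^sup>2 / (real n * real t) *
       (\<Sum>i<n. \<Sum>u\<in>U. (r i u)\<^sup>2 * io i u * (w i u)\<^sup>2)"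

definition obj_u where
  "obj_u n t u V N X io r \<sigma> wu =
     (Iu_fun n u V N X io r wu)\<^sup>2 + \<sigma>\<^sup>2 / (real n * real t) *
       (\<Sum>i<n. (r i u)\<^sup>2 * io i u * (wu i)\<^sup>2)"

end

theory Submission
  imports Defs "HOL-Analysis.L2_Norm"
begin

lemma L_zero:
  assumes nfs: "normed_fun_space V N"
  and lin: "\<And>c h. h\<in>V \<Longrightarrow> L (\<lambda>x. c * h x) = c * L h"
  shows "L (\<lambda>_. 0) = 0"
proof -
  have z: "(\<lambda>_. 0::real) \<in> V" using nfs unfolding normed_fun_space_def by blast
  have "L (\<lambda>x. 0 * (\<lambda>_. 0::real) x) = 0 * L (\<lambda>_. 0)" using lin[OF z] .
  then show ?thesis by simp
qed

lemma L_le: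
  assumes nfs: "normed_fun_space V N"
  and lin: "\<And>c h. h\<in>V \<Longrightarrow> L (\<lambda>x. c * h x) = c * L h"
  and bdd: "bdd_above {L hu | hu. hu \<in> V \<and> N hu \<le> 1}"
  and h: "h \<in> V"
  shows "L h \<le> Sup {L hu | hu. hu \<in> V \<and> N hu \<le> 1} * N h"
proof (cases "N h = 0")
  case True
  then have "h = (\<lambda>_. 0)" using nfs h unfolding normed_fun_space_def by blast
  moreover have "L (\<lambda>_. 0) = 0" by (rule L_zero[OF nfs]) (rule lin)
  ultimately have "L h = 0" by simp
  then show ?thesis using True by simp
next
  case False
  then have pos: "N h > 0" using nfs h unfolding normed_fun_space_def by force
  define h' where "h' = (\<lambda>x. (1 / N h) * h x)"
  have hV: "h' \<in> V" using nfs h unfolding normed_fun_space_def h'_def by blast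
  have "N h' = \<bar>1 / N h\<bar> * N h" using nfs h unfolding normed_fun_space_def h'_def by blast
  then have "N h' = 1" using pos by simp
  then have "L h' \<le> Sup {L hu | hu. hu \<in> V \<and> N hu \<le> 1}"
    using hV by (intro cSup_upper[OF _ bdd]) auto
  moreover have "L h' = L h / N h" unfolding h'_def using lin[OF h, of "1 / N h"] by simp
  ultimately have "L h / N h \<le> Sup {L hu | hu. hu \<in> V \<and> N hu \<le> 1}" by simp
  then show ?thesis using pos by (simp only: pos_divide_le_eq)
qed

lemma Su_bdd:
  fixes L :: "nat \<Rightarrow> ('x\<Rightarrow>real) \<Rightarrow> real" and U :: "nat set"
  assumes fin: "finite U"
  and nfs: "normed_fun_space V N"
  and lin: "\<And>u c h. u\<in>U \<Longrightarrow> h\<in>V \<Longrightarrow> L u (\<lambda>x. c * h x) = c * L u h"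
  and bdd: "bdd_above {(\<Sum>u\<in>U. L u (h u)) | h. (\<forall>u\<in>U. h u \<in> V) \<and> (\<Sum>u\<in>U. (N (h u))\<^sup>2) \<le> 1}"
  and u: "u \<in> U"
  shows "bdd_above {L u hu | hu. hu \<in> V \<and> N hu \<le> 1}"
proof -
  obtain M where M: "\<And>y. y \<in> {(\<Sum>u\<in>U. L u (h u)) | h. (\<forall>u\<in>U. h u \<in> V) \<and> (\<Sum>u\<in>U. (N (h u))\<^sup>2) \<le> 1} \<Longrightarrow> y \<le> M"
    using bdd unfolding bdd_above_def by blast
  have z: "(\<lambda>_. 0::real) \<in> V" and N0: "N (\<lambda>_. 0) = 0"
    using nfs unfolding normed_fun_space_def by blast+
  have Lz: "L v (\<lambda>_. 0) = 0" if "v \<in> U" for v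
    by (rule L_zero[OF nfs]) (rule lin[OF that])
  show ?thesis unfolding bdd_above_def
  proof (intro exI allI impI ballI)
    fix y assume "y \<in> {L u hu | hu. hu \<in> V \<and> N hu \<le> 1}"
    then obtain hu where hu: "hu \<in> V" "N hu \<le> 1" "y = L u hu" by blast
    have N0h: "N hu \<ge> 0" using nfs hu unfolding normed_fun_space_def by blast
    define h where "h = (\<lambda>v. if v = u then hu else (\<lambda>_. 0::real))"
    have hV: "\<forall>v\<in>U. h v \<in> V" using z hu unfolding h_def by auto
    have "(\<Sum>v\<in>U. (N (h v))\<^sup>2) = (\<Sum>v\<in>U. if v = u then (N hu)\<^sup>2 else 0)"
      by (rule sum.cong) (auto simp: h_def N0)
    also have "\<dots> = (N hu)\<^sup>2" using fin u by simp
    also have "\<dots> \<le> 1" using hu N0h by (simp add: power_le_one)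
    finally have "(\<Sum>v\<in>U. (N (h v))\<^sup>2) \<le> 1" .
    then have "(\<Sum>v\<in>U. L v (h v)) \<le> M" using hV by (intro M) blast
    moreover have "(\<Sum>v\<in>U. L v (h v)) = (\<Sum>v\<in>U. if v = u then L u hu else 0)"
      by (rule sum.cong) (auto simp: h_def Lz)
    moreover have "\<dots> = L u hu" using fin u by simp
    ultimately show "y \<le> M" using hu by simp
  qed
qed

lemma sup_decomp:
  fixes L :: "nat \<Rightarrow> ('x\<Rightarrow>real) \<Rightarrow> real" and U :: "nat set"
  assumes fin: "finite U"
  and nfs: "normed_fun_space V N"
  and lin: "\<And>u c h. u\<in>U \<Longrightarrow> h\<in>V \<Longrightarrow> L u (\<lambda>x. c * h x) = c * L u h"
  and bdd: "bdd_above {(\<Sum>u\<in>U. L u (h u)) | h. (\<forall>u\<in>U. h u \<in> V) \<and> (\<Sum>u\<in>U. (N (h u))\<^sup>2) \<le> 1}"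
  shows "(Sup {(\<Sum>u\<in>U. L u (h u)) | h. (\<forall>u\<in>U. h u \<in> V) \<and> (\<Sum>u\<in>U. (N (h u))\<^sup>2) \<le> 1})\<^sup>2
    = (\<Sum>u\<in>U. (Sup {L u hu | hu. hu \<in> V \<and> N hu \<le> 1})\<^sup>2)"
proof -
  define J where "J = {(\<Sum>u\<in>U. L u (h u)) | h. (\<forall>u\<in>U. h u \<in> V) \<and> (\<Sum>u\<in>U. (N (h u))\<^sup>2) \<le> 1}"
  define I where "I u = Sup {L u hu | hu. hu \<in> V \<and> N hu \<le> 1}" for u
  define S where "S = sqrt (\<Sum>u\<in>U. (I u)\<^sup>2)"
  have z: "(\<lambda>_. 0::real) \<in> V" and N0: "N (\<lambda>_. 0) = 0"
    using nfs unfolding normed_fun_space_def by blast+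
  have Nnn: "N f \<ge> 0" if "f \<in> V" for f using nfs that unfolding normed_fun_space_def by blast
  have Lz: "L v (\<lambda>_. 0) = 0" if "v \<in> U" for v
    by (rule L_zero[OF nfs]) (rule lin[OF that])
  have bddu: "bdd_above {L u hu | hu. hu \<in> V \<and> N hu \<le> 1}" if "u \<in> U" for u
    by (rule Su_bdd[OF fin nfs lin bdd that])
  have Lle: "L u h \<le> I u * N h" if "u \<in> U" "h \<in> V" for u h
    unfolding I_def by (rule L_le[OF nfs _ bddu[OF that(1)] that(2)]) (rule lin[OF that(1)])
  have Inn: "I u \<ge> 0" if "u \<in> U" for u
  proof -
    have "L u (\<lambda>_. 0) \<le> I u" unfolding I_def
      by (rule cSup_upper[OF _ bddu[OF that]]) (use z N0 in auto)
    then show ?thesis using Lz[OF that] by simp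
  qed
  have Jne: "0 \<in> J"
  proof -
    have "(\<Sum>u\<in>U. L u ((\<lambda>_. (\<lambda>_. 0::real)) u)) = 0" using Lz by simp
    moreover have "(\<Sum>u\<in>U. (N ((\<lambda>_. (\<lambda>_. 0::real)) u))\<^sup>2) \<le> 1" using N0 by simp
    ultimately show ?thesis unfolding J_def mem_Collect_eq using z
      by (intro exI[of _ "\<lambda>_. \<lambda>_. 0::real"]) simp
  qed
  have bddJ: "bdd_above J" using bdd unfolding J_def .
  have S0: "S \<ge> 0" unfolding S_def by (simp add: sum_nonneg)
  have upper: "y \<le> S" if "y \<in> J" for y
  proof -
    obtain h where h: "\<forall>u\<in>U. h u \<in> V" "(\<Sum>u\<in>U. (N (h u))\<^sup>2) \<le> 1" "y = (\<Sum>u\<in>U. L u (h u))"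
      using \<open>y \<in> J\<close> unfolding J_def by blast
    have "y \<le> (\<Sum>u\<in>U. I u * N (h u))" unfolding h(3) by (rule sum_mono) (use Lle h in auto)
    also have "\<dots> \<le> (\<Sum>u\<in>U. \<bar>I u\<bar> * \<bar>N (h u)\<bar>)" by (rule sum_mono) (simp add: abs_mult[symmetric])
    also have "\<dots> \<le> L2_set I U * L2_set (\<lambda>u. N (h u)) U" by (rule L2_set_mult_ineq)
    also have "\<dots> = S * L2_set (\<lambda>u. N (h u)) U" by (simp add: S_def L2_set_def)
    also have "\<dots> \<le> S * 1"
    proof (rule mult_left_mono)
      show "L2_set (\<lambda>u. N (h u)) U \<le> 1" unfolding L2_set_def using h(2) by simp
      show "0 \<le> S" by (rule S0)
    qed
    finally show ?thesis by simp
  qed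
  have supJ_le: "Sup J \<le> S" using Jne upper by (intro cSup_least) auto
  have supJ_ge: "S \<le> Sup J"
  proof (cases "S = 0")
    case True
    then show ?thesis using cSup_upper[OF Jne bddJ] by simp
  next
    case False
    then have Spos: "S > 0" using S0 by simp
    show ?thesis
    proof (rule ccontr)
      assume "\<not> S \<le> Sup J"
      then have lt: "Sup J < S" by simp
      define e where "e = (S - Sup J) / (real (card U) + 1)"
      have epos: "e > 0" unfolding e_def using lt by simp
      have "\<exists>g. g \<in> V \<and> N g \<le> 1 \<and> I u - e < L u g" if uU: "u \<in> U" for u
      proof -
        have "I u - e < Sup {L u hu | hu. hu \<in> V \<and> N hu \<le> 1}" using epos unfolding I_def by simp
        moreover have "{L u hu | hu. hu \<in> V \<and> N hu \<le> 1} \<noteq> {}" using z N0 by auto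
        ultimately obtain y where "y \<in> {L u hu | hu. hu \<in> V \<and> N hu \<le> 1}" "I u - e < y"
          using less_cSup_iff[OF _ bddu[OF uU]] by blast
        then show ?thesis by blast
      qed
      then obtain g where g: "\<And>u. u \<in> U \<Longrightarrow> g u \<in> V \<and> N (g u) \<le> 1 \<and> I u - e < L u (g u)"
        by metis
      define c where "c u = I u / S" for u
      have c0: "c u \<ge> 0" if "u \<in> U" for u unfolding c_def using Inn[OF that] S0 by simp
      have SS: "S\<^sup>2 = (\<Sum>u\<in>U. (I u)\<^sup>2)" unfolding S_def by (simp add: sum_nonneg)
      have csq: "(\<Sum>u\<in>U. (c u)\<^sup>2) = 1"
      proof -
        have "(\<Sum>u\<in>U. (c u)\<^sup>2) = (\<Sum>u\<in>U. (I u)\<^sup>2) / S\<^sup>2"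
          unfolding c_def by (simp add: power_divide sum_divide_distrib)
        then show ?thesis using SS Spos by (metis divide_self power_not_zero less_irrefl)
      qed
      have c1: "c u \<le> 1" if "u \<in> U" for u
      proof -
        have "(c u)\<^sup>2 \<le> (\<Sum>u\<in>U. (c u)\<^sup>2)"
          by (rule member_le_sum[OF that _ fin]) simp
        then have "(c u)\<^sup>2 \<le> 1\<^sup>2" using csq by simp
        then show ?thesis using c0[OF that] by (metis power2_le_imp_le zero_le_one)
      qed
      define h where "h u = (\<lambda>x. c u * g u x)" for u
      have hV: "\<forall>u\<in>U. h u \<in> V" using nfs g unfolding h_def normed_fun_space_def by blast
      have Nh: "N (h u) = c u * N (g u)" if "u \<in> U" for u
        using nfs g[OF that] c0[OF that] unfolding h_def normed_fun_space_def by simp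
      have "(\<Sum>u\<in>U. (N (h u))\<^sup>2) \<le> (\<Sum>u\<in>U. (c u)\<^sup>2)"
      proof (rule sum_mono)
        fix u assume u: "u \<in> U"
        have "N (g u) \<ge> 0" "N (g u) \<le> 1" using g[OF u] Nnn by auto
        then have "c u * N (g u) \<le> c u" "0 \<le> c u * N (g u)" using c0[OF u]
          by (auto simp: mult_left_le)
        then show "(N (h u))\<^sup>2 \<le> (c u)\<^sup>2" using Nh[OF u] by (simp add: power_mono)
      qed
      then have "(\<Sum>u\<in>U. L u (h u)) \<in> J" unfolding J_def using hV csq by auto
      then have A: "(\<Sum>u\<in>U. L u (h u)) \<le> Sup J" by (rule cSup_upper[OF _ bddJ])
      have "(\<Sum>u\<in>U. L u (h u)) = (\<Sum>u\<in>U. c u * L u (g u))"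
        unfolding h_def by (rule sum.cong) (use lin g in auto)
      also have "\<dots> \<ge> (\<Sum>u\<in>U. c u * (I u - e))"
      proof (rule sum_mono)
        fix u assume u: "u \<in> U"
        show "c u * (I u - e) \<le> c u * L u (g u)"
          using g[OF u] c0[OF u] by (intro mult_left_mono) auto
      qed
      finally have B: "(\<Sum>u\<in>U. c u * (I u - e)) \<le> (\<Sum>u\<in>U. L u (h u))" .
      have "(\<Sum>u\<in>U. c u * (I u - e)) = (\<Sum>u\<in>U. c u * I u) - e * (\<Sum>u\<in>U. c u)"
        by (simp add: algebra_simps sum_subtractf sum_distrib_left)
      moreover have "(\<Sum>u\<in>U. c u * I u) = S"
      proof -
        have "(\<Sum>u\<in>U. c u * I u) = (\<Sum>u\<in>U. (I u)\<^sup>2) / S"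
          unfolding c_def by (simp add: sum_divide_distrib power2_eq_square)
        then show ?thesis using SS Spos by (metis SS Spos less_irrefl nonzero_mult_div_cancel_left power2_eq_square)
      qed
      moreover have "(\<Sum>u\<in>U. c u) \<le> real (card U)"
        using sum_mono[of U c "\<lambda>_. 1"] c1 by simp
      moreover have "e * (\<Sum>u\<in>U. c u) \<le> e * real (card U)"
        by (rule mult_left_mono[OF calculation(3)]) (use epos in simp)
      ultimately have "S - e * real (card U) \<le> (\<Sum>u\<in>U. c u * (I u - e))"
        by linarith
      moreover have "S - e * real (card U) > Sup J"
      proof -
        have "e * (real (card U) + 1) = S - Sup J" unfolding e_def by simp
        then show ?thesis using epos by (simp add: algebra_simps)
      qed
      ultimately show False using A B by simp
    qed
  qed
  have "Sup J = S" using supJ_le supJ_ge by simp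
  then have "(Sup J)\<^sup>2 = (\<Sum>u\<in>U. (I u)\<^sup>2)" unfolding S_def by (simp add: sum_nonneg)
  then show ?thesis unfolding J_def I_def .
qed


definition Lw :: "nat \<Rightarrow> (nat \<Rightarrow> 'x) \<Rightarrow> (nat \<Rightarrow> nat \<Rightarrow> real) \<Rightarrow> (nat \<Rightarrow> nat \<Rightarrow> real)
    \<Rightarrow> (nat \<Rightarrow> nat \<Rightarrow> real) \<Rightarrow> nat \<Rightarrow> ('x \<Rightarrow> real) \<Rightarrow> real" where
  "Lw n X io r w u h = (1 / real n) * (\<Sum>i<n. r i u * h (X i) - io i u * r i u * w i u * h (X i))"

lemma Lw_lin: "Lw n X io r w u (\<lambda>x. c * h x) = c * Lw n X io r w u h"
  unfolding Lw_def by (simp add: sum_distrib_left algebra_simps)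

lemma I_set_eq: "I_set n U V N X io r w =
  {(\<Sum>u\<in>U. Lw n X io r w u (h u)) | h. (\<forall>u\<in>U. h u \<in> V) \<and> (\<Sum>u\<in>U. (N (h u))\<^sup>2) \<le> 1}"
proof -
  have e: "(1 / real n) * (\<Sum>i<n. \<Sum>u\<in>U. r i u * h u (X i) - io i u * r i u * w i u * h u (X i))
    = (\<Sum>u\<in>U. Lw n X io r w u (h u))" for h
    unfolding Lw_def sum_distrib_left by (rule sum.swap)
  show ?thesis unfolding I_set_def e ..
qed

lemma Iu_set_eq: "Iu_set n u V N X io r (\<lambda>i. w i u) = {Lw n X io r w u hu | hu. hu \<in> V \<and> N hu \<le> 1}"
  unfolding Iu_set_def Lw_def ..

lemma I_fun_eq:
  assumes "finite U" "normed_fun_space V N" "bdd_above (I_set n U V N X io r w)"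
  shows "(I_fun n U V N X io r w)\<^sup>2 = (\<Sum>u\<in>U. (Iu_fun n u V N X io r (\<lambda>i. w i u))\<^sup>2)"
  unfolding I_fun_def Iu_fun_def I_set_eq Iu_set_eq
  by (rule sup_decomp[OF assms(1,2)]) (auto simp: Lw_lin assms(3)[unfolded I_set_eq])

lemma obj_eq:
  assumes "finite U" "normed_fun_space V N" "bdd_above (I_set n U V N X io r w)"
  shows "obj n t U V N X io r \<sigma> w = (\<Sum>u\<in>U. obj_u n t u V N X io r \<sigma> (\<lambda>i. w i u))"
  unfolding obj_def obj_u_def I_fun_eq[OF assms] sum.distrib sum_distrib_left
  by (simp add: sum.swap[of _ U "{..<n}"])

theorem lemma1:
  fixes n t tmax a :: nat
    and A :: "nat \<Rightarrow> nat" and Tt :: "nat \<Rightarrow> real"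
    and X :: "nat \<Rightarrow> 'x" and r :: "nat \<Rightarrow> nat \<Rightarrow> real"
    and V :: "('x \<Rightarrow> real) set" and N :: "('x \<Rightarrow> real) \<Rightarrow> real"
    and \<sigma> :: real and w_hat :: "nat \<Rightarrow> nat \<Rightarrow> real"
  defines "U \<equiv> {u. u \<le> tmax \<and> u \<le> t}"
  defines "io \<equiv> iota A Tt a"
  assumes "n \<ge> 1" and "a \<in> {0, 1}" and "\<forall>i<n. A i \<in> {0, 1}" and "t \<le> tmax"
    and "normed_fun_space V N" and "\<sigma> > 0"
    and well_defined: "\<forall>w. bdd_above (I_set n U V N X io r w)"
    and minimizer: "\<forall>w. obj n t U V N X io r \<sigma> w_hat \<le> obj n t U V N X io r \<sigma> w"
  shows "\<forall>u\<in>U. \<forall>wu. obj_u n t u V N X io r \<sigma> (\<lambda>i. w_hat i u) \<le> obj_u n t u V N X io r \<sigma> wu"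
proof (intro ballI allI)
  fix u wu assume u: "u \<in> U"
  have fin: "finite U" unfolding U_def by simp
  define w' where "w' = (\<lambda>i v. if v = u then wu i else w_hat i v)"
  let ?f = "obj_u n t u V N X io r \<sigma>"
  let ?g = "\<lambda>v. obj_u n t v V N X io r \<sigma>"
  have "obj n t U V N X io r \<sigma> w_hat = ?f (\<lambda>i. w_hat i u) + (\<Sum>v\<in>U-{u}. ?g v (\<lambda>i. w_hat i v))"
    using obj_eq[OF fin assms(7) well_defined[rule_format]] sum.remove[OF fin u] by simp
  moreover have "obj n t U V N X io r \<sigma> w' = ?f wu + (\<Sum>v\<in>U-{u}. ?g v (\<lambda>i. w_hat i v))"
  proof -
    have "obj n t U V N X io r \<sigma> w' = ?g u (\<lambda>i. w' i u) + (\<Sum>v\<in>U-{u}. ?g v (\<lambda>i. w' i v))"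
      using obj_eq[OF fin assms(7) well_defined[rule_format]] sum.remove[OF fin u] by simp
    moreover have "(\<Sum>v\<in>U-{u}. ?g v (\<lambda>i. w' i v)) = (\<Sum>v\<in>U-{u}. ?g v (\<lambda>i. w_hat i v))"
      by (rule sum.cong) (auto simp: w'_def)
    moreover have "(\<lambda>i. w' i u) = wu" by (simp add: w'_def)
    ultimately show ?thesis by simp
  qed
  moreover have "obj n t U V N X io r \<sigma> w_hat \<le> obj n t U V N X io r \<sigma> w'" using minimizer by blast
  ultimately show "?f (\<lambda>i. w_hat i u) \<le> ?f wu" by simp
qed

end
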